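(* Let $G$ be a circle of circumference $1$, let $\mathbf{x}\in G^n$ be such that the agents are not on one semicircle, and let $i\in N$, $x_i'\in G$ be such that the agents in $\mathbf{x}'=(x_i',\mathbf{x}_{-i})$ are on one semicircle. Then $\mathrm{cost}(\mathrm{rc}(\mathbf{x}),x_i)\le\mathrm{cost}(\mathrm{lrm}(\mathbf{x}'),x_i)$.
   Context: $d(x,y)$ is the shorter-arc length; $\hat x$ the antipode of $x$; $\mathrm{cost}(P,x_i)=\mathbb{E}_{y\sim P}[d(x_i,y)]$. Agents are on one semicircle if all locations lie in some closed arc of length $1/2$. LRM: for a profile on one semicircle, fix a closed arc of minimal length containing all locations, with endpoints $l,r$; $\mathrm{lrm}$ returns $l$ w.p. $1/4$, $r$ w.p. $1/4$, and the midpoint of that arc w.p. $1/2$. RC: the antipodal points $\hat{x}_1,\dots,\hat{x}_n$ partition $G$ into arcs between cyclically consecutive antipodal points; $\mathrm{rc}$ returns the midpoint of each such arc with probability equal to its length. *)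

theory Defs
  imports Complex_Main
begin

text \<open>The circle G of circumference 1 is represented by the reals modulo 1:
  a real number y denotes the point (frac y) of the circle. Agents are indexed by {..<n}.\<close>

definition cdist :: "real \<Rightarrow> real \<Rightarrow> real" where
  "cdist x y = min (frac (x - y)) (frac (y - x))"

definition antipode :: "real \<Rightarrow> real" where
  "antipode x = x + 1/2"

definition in_arc :: "real \<Rightarrow> real \<Rightarrow> real \<Rightarrow> bool" where
  "in_arc a L y \<longleftrightarrow> frac (y - a) \<le> L"

definition arc_contains_all :: "nat \<Rightarrow> (nat \<Rightarrow> real) \<Rightarrow> real \<Rightarrow> real \<Rightarrow> bool" where
  "arc_contains_all n x a L \<longleftrightarrow> 0 \<le> L \<and> L \<le> 1 \<and> (\<forall>j<n. in_arc a L (x j))"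

definition one_semicircle :: "nat \<Rightarrow> (nat \<Rightarrow> real) \<Rightarrow> bool" where
  "one_semicircle n x \<longleftrightarrow> (\<exists>a. arc_contains_all n x a (1/2))"

definition minimal_arc :: "nat \<Rightarrow> (nat \<Rightarrow> real) \<Rightarrow> real \<Rightarrow> real \<Rightarrow> bool" where
  "minimal_arc n x a L \<longleftrightarrow> arc_contains_all n x a L \<and>
     (\<forall>a' L'. arc_contains_all n x a' L' \<longrightarrow> L \<le> L')"

text \<open>Finitely supported distributions as lists of (probability, point) pairs;
  the cost of a point is its expected distance to the random outcome.\<close>
definition cost :: "(real \<times> real) list \<Rightarrow> real \<Rightarrow> real" where
  "cost P y = (\<Sum>(p, z) \<leftarrow> P. p * cdist y z)"

text \<open>LRM for the fixed minimal arc [a, a+L]: endpoints l = a, r = a + L, midpoint a + L/2.\<close>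
definition lrm :: "real \<Rightarrow> real \<Rightarrow> (real \<times> real) list" where
  "lrm a L = [(1/4, a), (1/4, a + L), (1/2, a + L/2)]"

text \<open>RC: the distinct antipodal points (normalised to [0,1)) split the circle into arcs;
  the arc starting at p ends at the next antipodal point counterclockwise.\<close>
definition antipodes :: "nat \<Rightarrow> (nat \<Rightarrow> real) \<Rightarrow> real set" where
  "antipodes n x = (\<lambda>j. frac (antipode (x j))) ` {..<n}"

definition rc_gap :: "real set \<Rightarrow> real \<Rightarrow> real" where
  "rc_gap A p = (if A - {p} = {} then 1 else Min ((\<lambda>q. frac (q - p)) ` (A - {p})))"

definition rc :: "nat \<Rightarrow> (nat \<Rightarrow> real) \<Rightarrow> (real \<times> real) list" where
  "rc n x = map (\<lambda>p. (rc_gap (antipodes n x) p, p + rc_gap (antipodes n x) p / 2))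
              (sorted_list_of_set (antipodes n x))"

end

theory Submission
  imports Defs
begin

lemma frac_diff01:
  assumes "0 \<le> a" "a < 1" "0 \<le> b" "b < (1::real)"
  shows "frac (b - a) = (if a \<le> b then b - a else b - a + 1)"
proof (cases "a \<le> b")
  case True then show ?thesis using assms by (simp add: frac_eq)
next
  case False
  have "frac (b - a) = frac ((b - a + 1) + of_int (-1))" by simp
  also have "\<dots> = b - a + 1" by (subst frac_add_of_int_right) (use False assms in \<open>simp add: frac_eq\<close>)
  finally show ?thesis using False by simp
qed

lemma cdist_int:
  assumes "\<bar>x - y - of_int k\<bar> \<le> 1/2"
  shows "cdist x y = \<bar>x - y - of_int k\<bar>"
proof -
  define d where "d = x - y - of_int k"
  have e1: "frac (x - y) = frac d" unfolding d_def
    by (metis diff_add_cancel frac_add_of_int_right)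
  have e2: "frac (y - x) = frac (- d)" unfolding d_def
    by (metis add.commute diff_diff_eq2 diff_minus_eq_add frac_add_of_int_right minus_diff_eq uminus_add_conv_diff)
  have dd: "\<bar>d\<bar> \<le> 1/2" using assms d_def by simp
  show ?thesis
  proof (cases "d \<ge> 0")
    case True
    have "frac d = d" using True dd by (simp add: frac_eq)
    moreover have "frac (-d) \<ge> d"
    proof (cases "d = 0")
      case False
      have "frac (-d) = frac (-d + 1) " by (metis frac_1_eq)
      also have "\<dots> = 1 - d" using True False dd by (simp add: frac_eq)
      finally show ?thesis using dd by simp
    qed simp
    ultimately show ?thesis unfolding cdist_def e1 e2 d_def[symmetric] using True by simp
  next
    case False
    have "frac (-d) = -d" using False dd by (simp add: frac_eq)
    moreover have "frac d = d + 1"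
    proof -
      have "frac d = frac (d + 1)" by (metis frac_1_eq)
      also have "\<dots> = d + 1" using False dd by (simp add: frac_eq)
      finally show ?thesis .
    qed
    ultimately show ?thesis unfolding cdist_def e1 e2 d_def[symmetric] using False dd by simp
  qed
qed

definition nxt :: "real set \<Rightarrow> real \<Rightarrow> real" where
  "nxt U u = Min (insert 1 {w\<in>U. u < w})"

lemma nxt_bounds:
  assumes "finite U" "u < 1"
  shows "u < nxt U u" "nxt U u \<le> 1"
  using assms by (auto simp: nxt_def)

lemma telescope:
  fixes F :: "real \<Rightarrow> real"
  assumes "finite U" "\<forall>u\<in>U. u < 1"
  shows "(\<Sum>u\<in>U. F (nxt U u) - F u) = F 1 - F (Min (insert 1 U))"
  using assms
proof (induction "card U" arbitrary: U)
  case 0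
  then have "U = {}" by simp
  then show ?case by simp
next
  case (Suc k)
  then have ne: "U \<noteq> {}" by auto
  define m where "m = Min U"
  have mU: "m \<in> U" using ne Suc.prems m_def by simp
  have mle: "\<forall>u\<in>U. m \<le> u" using Suc.prems m_def by simp
  define U' where "U' = U - {m}"
  have cU': "card U' = k" using Suc.hyps(2) mU U'_def Suc.prems by simp
  have IH: "(\<Sum>u\<in>U'. F (nxt U' u) - F u) = F 1 - F (Min (insert 1 U'))"
    using Suc.hyps(1)[OF cU'[symmetric]] Suc.prems U'_def by auto
  have eq1: "nxt U u = nxt U' u" if "u \<in> U'" for u
  proof -
    have "{w\<in>U. u < w} = {w\<in>U'. u < w}" using that mle U'_def by force
    then show ?thesis by (simp add: nxt_def)
  qed
  have eq2: "nxt U m = Min (insert 1 U')"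
  proof -
    have "{w\<in>U. m < w} = U'" using mle U'_def by force
    then show ?thesis by (simp add: nxt_def)
  qed
  have "U = insert m U'" using mU U'_def by auto
  then have "(\<Sum>u\<in>U. F (nxt U u) - F u) = (F (nxt U m) - F m) + (\<Sum>u\<in>U'. F (nxt U u) - F u)"
    using Suc.prems U'_def mU by (simp add: sum.remove)
  also have "(\<Sum>u\<in>U'. F (nxt U u) - F u) = (\<Sum>u\<in>U'. F (nxt U' u) - F u)"
    by (intro sum.cong refl) (simp add: eq1)
  finally have "(\<Sum>u\<in>U. F (nxt U u) - F u) = F 1 - F m" using IH eq2 by simp
  moreover have "Min (insert 1 U) = m"
    using Suc.prems mU mle by (intro Min_eqI) auto
  ultimately show ?case by simp
qed

definition GG :: "real \<Rightarrow> real" where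
  "GG y = (if y \<le> 1/2 then y/2 - y^2/2 else 1/8 + (y - 1/2)^2/2)"

lemma pointwise:
  assumes "0 \<le> u" "u \<le> v" "v \<le> (1::real)"
  shows "(v - u) * \<bar>1/2 - (u + (v - u)/2)\<bar> \<le> GG v - GG u"
proof -
  consider "v \<le> 1/2" | "1/2 < u" | "u \<le> 1/2" "1/2 < v" "u + v \<le> 1" | "u \<le> 1/2" "1/2 < v" "u + v > 1" by linarith
  then show ?thesis
  proof cases
    case 1
    have "(v - u) * \<bar>1/2 - (u + (v - u)/2)\<bar> = (v - u) * (1/2 - (u+v)/2)" using 1 assms by (simp add: abs_if field_simps)
    moreover have "GG v - GG u = (v/2 - v^2/2) - (u/2 - u^2/2)" using 1 assms unfolding GG_def by simp
    moreover have "(v - u) * (1/2 - (u+v)/2) = (v/2 - v^2/2) - (u/2 - u^2/2)" by (simp add: power2_eq_square field_simps)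
    ultimately show ?thesis by linarith
  next
    case 2
    have "(v - u) * \<bar>1/2 - (u + (v - u)/2)\<bar> = (v - u) * ((u+v)/2 - 1/2)" using 2 assms by (simp add: abs_if field_simps)
    moreover have "GG v - GG u = (1/8 + (v - 1/2)^2/2) - (1/8 + (u - 1/2)^2/2)" using 2 assms unfolding GG_def by auto
    moreover have "(v - u) * ((u+v)/2 - 1/2) = (1/8 + (v - 1/2)^2/2) - (1/8 + (u - 1/2)^2/2)" by (simp add: power2_eq_square field_simps)
    ultimately show ?thesis by linarith
  next
    case 3
    have "(v - u) * \<bar>1/2 - (u + (v - u)/2)\<bar> = (v - u) * (1/2 - (u+v)/2)" using 3 by (simp add: abs_if field_simps)
    moreover have "GG v - GG u = 1/8 + (v - 1/2)^2/2 - (u/2 - u^2/2)" using 3 unfolding GG_def by simp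
    moreover have "(1/8 + (v - 1/2)^2/2 - (u/2 - u^2/2)) - (v - u) * (1/2 - (u+v)/2) = (v - 1/2)^2"
      by (simp add: power2_eq_square field_simps)
    moreover have "(v - 1/2)^2 \<ge> 0" by simp
    ultimately show ?thesis by linarith
  next
    case 4
    have "(v - u) * \<bar>1/2 - (u + (v - u)/2)\<bar> = (v - u) * ((u+v)/2 - 1/2)" using 4 by (simp add: abs_if field_simps)
    moreover have "GG v - GG u = 1/8 + (v - 1/2)^2/2 - (u/2 - u^2/2)" using 4 unfolding GG_def by simp
    moreover have "(1/8 + (v - 1/2)^2/2 - (u/2 - u^2/2)) - (v - u) * ((u+v)/2 - 1/2) = (u - 1/2)^2"
      by (simp add: power2_eq_square field_simps)
    moreover have "(u - 1/2)^2 \<ge> 0" by simp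
    ultimately show ?thesis by linarith
  qed
qed

lemma int_small: assumes "\<bar>(of_int k::real)\<bar> < 1" shows "k = 0"
proof -
  have "(of_int \<bar>k\<bar>::real) < of_int 1" using assms by simp
  then have "\<bar>k\<bar> < 1" by (simp only: of_int_less_iff)
  then show ?thesis by simp
qed

lemma gap:
  assumes fin: "finite A" and A01: "\<forall>q\<in>A. 0 \<le> q \<and> q < 1" and cA: "c \<in> A" and pA: "p \<in> A"
  shows "rc_gap A p = nxt ((\<lambda>q. frac (q - c)) ` A) (frac (p - c)) - frac (p - c)"
proof -
  define u where "u q = frac (q - c)" for q
  define U where "U = u ` A"
  have inj: "q1 = q2" if h: "q1 \<in> A" "q2 \<in> A" "u q1 = u q2" for q1 q2
  proof -
    obtain k where k: "q1 - c = q2 - c + of_int k" using h(3) unfolding u_def by (rule frac_eqE)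
    have "0 \<le> q1" "q1 < 1" "0 \<le> q2" "q2 < 1" using A01 h(1,2) by auto
    then have "\<bar>(of_int k::real)\<bar> < 1" using k by linarith
    then have "k = 0" by (rule int_small)
    then show ?thesis using k by simp
  qed
  have fq: "frac (q - p) = (if u p \<le> u q then u q - u p else u q - u p + 1)" for q
  proof -
    have "u q - u p = (q - p) + of_int (floor (p - c) - floor (q - c))" by (simp add: u_def frac_def)
    then have "frac (q - p) = frac (u q - u p)" by (simp only: frac_add_of_int_right)
    also have "\<dots> = (if u p \<le> u q then u q - u p else u q - u p + 1)"
      by (rule frac_diff01) (auto simp: u_def frac_lt_1)
    finally show ?thesis .
  qed
  have finU: "finite U" using fin U_def by simp
  have upl1: "u p < 1" by (simp add: u_def frac_lt_1)
  have nxtb: "u p < nxt U (u p)" "nxt U (u p) \<le> 1" using nxt_bounds[OF finU upl1] by auto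
  show ?thesis
  proof (cases "A - {p} = {}")
    case True
    then have "A = {p}" using pA by auto
    then have "c = p" using cA by simp
    then have "U = {0}" "u p = 0" using \<open>A = {p}\<close> by (auto simp: U_def u_def)
    then have "{w\<in>U. u p < w} = {}" by auto
    then have "nxt U (u p) = 1" unfolding nxt_def by (simp only: Min_singleton)
    then show ?thesis using True \<open>u p = 0\<close> by (simp add: rc_gap_def U_def u_def[abs_def])
  next
    case False
    define S where "S = (\<lambda>q. frac (q - p)) ` (A - {p})"
    have finS: "finite S" "S \<noteq> {}" using fin False S_def by auto
    have gS: "rc_gap A p = Min S" using False by (simp add: rc_gap_def S_def)
    have le1: "Min S \<le> nxt U (u p) - u p"
    proof -
      have "nxt U (u p) \<in> insert 1 {w\<in>U. u p < w}" unfolding nxt_def using finU by (intro Min_in) auto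
      then consider "nxt U (u p) = 1" | w where "w \<in> U" "u p < w" "nxt U (u p) = w" by auto
      then show ?thesis
      proof cases
        case 1
        show ?thesis
        proof (cases "p = c")
          case True
          then have "u p = 0" by (simp add: u_def)
          obtain s where "s \<in> S" using finS by auto
          then have "s < 1" unfolding S_def by (auto simp: frac_lt_1)
          then have "Min S < 1" using finS \<open>s \<in> S\<close> by (meson Min_le le_less_trans)
          then show ?thesis using 1 \<open>u p = 0\<close> by simp
        next
          case pc: False
          have "u c = 0" by (simp add: u_def)
          have "u p \<noteq> 0" using inj[OF pA cA] pc \<open>u c = 0\<close> by auto
          then have "u p > 0" by (simp add: u_def order_le_neq_trans)
          have "frac (c - p) \<in> S" using cA pc S_def by auto
          moreover have "frac (c - p) = 1 - u p" using fq[of c] \<open>u c = 0\<close> \<open>u p > 0\<close> by simp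
          ultimately show ?thesis using 1 finS by (metis Min_le)
        qed
      next
        case (2 w)
        obtain q where q: "q \<in> A" "w = u q" using 2(1) U_def by auto
        have "q \<noteq> p" using 2(2) q by auto
        then have "frac (q - p) \<in> S" using q S_def by auto
        moreover have "frac (q - p) = w - u p" using fq[of q] q 2(2) by simp
        ultimately show ?thesis using 2 finS by (metis Min_le)
      qed
    qed
    have le2: "nxt U (u p) - u p \<le> Min S"
    proof -
      have "Min S \<in> S" using finS by simp
      then obtain q where q: "q \<in> A" "q \<noteq> p" "Min S = frac (q - p)" unfolding S_def by auto
      have "u q \<noteq> u p" using inj[OF q(1) pA] q(2) by auto
      show ?thesis
      proof (cases "u p < u q")
        case True
        have "u q \<in> insert 1 {w\<in>U. u p < w}" using True q U_def by auto
        then have "nxt U (u p) \<le> u q" unfolding nxt_def using finU by (intro Min_le) auto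
        then show ?thesis using q(3) fq[of q] True by simp
      next
        case False
        have "u q \<ge> 0" by (simp add: u_def)
        then show ?thesis using q(3) fq[of q] False nxtb(2) \<open>u q \<noteq> u p\<close> by simp
      qed
    qed
    show ?thesis using le1 le2 gS by (simp add: U_def u_def[abs_def])
  qed
qed

lemma frac_shift: "0 \<le> r \<Longrightarrow> r < 1 \<Longrightarrow> frac (r + of_int k) = r"
  by (simp add: frac_eq)

lemma rc_bound:
  assumes "i < n"
  shows "cost (rc n x) (x i) \<le> 1/4"
proof -
  define A where "A = antipodes n x"
  define g where "g p = rc_gap A p" for p
  define c where "c = frac (x i + 1/2)"
  define u where "u q = frac (q - c)" for q
  define U where "U = u ` A"
  have finA: "finite A" by (simp add: A_def antipodes_def)
  have A01: "\<forall>q\<in>A. 0 \<le> q \<and> q < 1" by (auto simp: A_def antipodes_def frac_lt_1)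
  have cA: "c \<in> A" using assms by (auto simp: A_def antipodes_def antipode_def c_def)
  have finU: "finite U" using finA U_def by simp
  have inj: "inj_on u A"
  proof (rule inj_onI)
    fix q1 q2 assume h: "q1 \<in> A" "q2 \<in> A" "u q1 = u q2"
    obtain k where k: "q1 - c = q2 - c + of_int k" using h(3) unfolding u_def by (rule frac_eqE)
    have "0 \<le> q1" "q1 < 1" "0 \<le> q2" "q2 < 1" using A01 h(1,2) by auto
    then have "\<bar>(of_int k::real)\<bar> < 1" using k by linarith
    then have "k = 0" by (rule int_small)
    then show "q1 = q2" using k by simp
  qed
  define psi where "psi t = (nxt U t - t) * \<bar>1/2 - (t + (nxt U t - t)/2)\<bar>" for t
  have cost_eq: "cost (rc n x) (x i) = (\<Sum>p\<in>A. g p * cdist (x i) (p + g p / 2))"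
    unfolding cost_def rc_def A_def[symmetric] g_def[symmetric]
    by (simp add: comp_def sum_list_distinct_conv_sum_set finA)
  have term_eq: "g p * cdist (x i) (p + g p / 2) = psi (u p)" if pA: "p \<in> A" for p
  proof -
    have gp: "g p = nxt U (u p) - u p" unfolding g_def U_def u_def by (rule gap[OF finA A01 cA pA])
    have upl1: "u p < 1" by (simp add: u_def frac_lt_1)
    have up0: "0 \<le> u p" by (simp add: u_def)
    have nb: "u p < nxt U (u p)" "nxt U (u p) \<le> 1" using nxt_bounds[OF finU upl1] by auto
    define w where "w = u p + g p / 2"
    have w01: "0 \<le> w" "w \<le> 1" using nb up0 gp w_def by linarith+
    define k where "k = floor (x i + 1/2) - floor (p - c) - 1"
    have "x i - (p + g p / 2) - of_int k = 1/2 - w"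
      unfolding k_def w_def u_def c_def frac_def by simp
    moreover have "\<bar>1/2 - w\<bar> \<le> 1/2" using w01 by linarith
    ultimately have "cdist (x i) (p + g p / 2) = \<bar>1/2 - w\<bar>"
      using cdist_int[of "x i" "p + g p / 2" k] by simp
    then show ?thesis unfolding psi_def w_def gp by simp
  qed
  have "cost (rc n x) (x i) = (\<Sum>p\<in>A. psi (u p))" using cost_eq term_eq by simp
  also have "\<dots> = (\<Sum>t\<in>U. psi t)" unfolding U_def using sum.reindex[OF inj, of psi] by simp
  also have "\<dots> \<le> (\<Sum>t\<in>U. GG (nxt U t) - GG t)"
  proof (rule sum_mono)
    fix t assume "t \<in> U"
    then have t01: "0 \<le> t" "t < 1" unfolding U_def u_def by (auto simp: frac_lt_1)
    have "t < nxt U t" "nxt U t \<le> 1" using nxt_bounds[OF finU t01(2)] by auto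
    then show "psi t \<le> GG (nxt U t) - GG t" unfolding psi_def using pointwise[of t "nxt U t"] t01 by simp
  qed
  also have "\<dots> = GG 1 - GG (Min (insert 1 U))"
    by (rule telescope[OF finU]) (auto simp: U_def u_def frac_lt_1)
  also have "Min (insert 1 U) = 0"
  proof (rule Min_eqI)
    have "u c = 0" by (simp add: u_def)
    then show "0 \<in> insert 1 U" using cA unfolding U_def by (metis image_eqI insertCI)
  qed (use finU in \<open>auto simp: U_def u_def\<close>)
  finally show ?thesis by (simp add: GG_def power2_eq_square)
qed

lemma lrm_bound:
  fixes n i :: nat and x :: "nat \<Rightarrow> real" and y a L :: real
  assumes ns: "\<not> one_semicircle n x"
    and iN: "i < n"
    and os: "one_semicircle n (x(i := y))"
    and ma: "minimal_arc n (x(i := y)) a L"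
  shows "1/4 \<le> cost (lrm a L) (x i)"
proof -
  obtain a0 where a0: "arc_contains_all n (x(i := y)) a0 (1/2)" using os by (auto simp: one_semicircle_def)
  have L2: "L \<le> 1/2" using ma a0 unfolding minimal_arc_def by blast
  have L0: "0 \<le> L" using ma by (auto simp: minimal_arc_def arc_contains_all_def)
  have inarc: "frac (x j - a) \<le> L" if "j < n" "j \<noteq> i" for j
    using ma that by (auto simp: minimal_arc_def arc_contains_all_def in_arc_def)
  define f where "f = floor (x i + 1/2 - a)"
  define t where "t = frac (x i + 1/2 - a)"
  have tf: "t = x i + 1/2 - a - of_int f" by (simp add: t_def f_def frac_def)
  have t01: "0 \<le> t" "t < 1" by (auto simp: t_def frac_lt_1)
  have tL: "t \<le> L"
  proof (rule ccontr)
    assume "\<not> t \<le> L"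
    then have tL': "L < t" by simp
    show False
    proof (cases "1/2 \<le> t")
      case True
      have "arc_contains_all n x a (1/2)"
        unfolding arc_contains_all_def in_arc_def
      proof (intro conjI allI impI)
        fix j assume j: "j < n"
        show "frac (x j - a) \<le> 1/2"
        proof (cases "j = i")
          case True
          have "x j - a = (t - 1/2) + of_int f" using tf True by simp
          then have "frac (x j - a) = t - 1/2" using frac_shift[of "t - 1/2" f] t01 \<open>1/2 \<le> t\<close> by simp
          then show ?thesis using t01 by simp
        next
          case False
          then show ?thesis using inarc[OF j False] L2 by simp
        qed
      qed auto
      then show False using ns by (auto simp: one_semicircle_def)
    next
      case False
      define b where "b = a + t - 1/2"
      have "arc_contains_all n x b (1/2)"
        unfolding arc_contains_all_def in_arc_def
      proof (intro conjI allI impI)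
        fix j assume j: "j < n"
        show "frac (x j - b) \<le> 1/2"
        proof (cases "j = i")
          case True
          have "x j - b = 0 + of_int f" using tf True b_def by simp
          then have "x j - b \<in> \<int>" by simp
          then have "frac (x j - b) = 0" by simp
          then show ?thesis by linarith
        next
          case ji: False
          define s where "s = frac (x j - a)"
          have s0: "0 \<le> s" "s \<le> L" using inarc[OF j ji] s_def by auto
          have "x j - b = (s + 1/2 - t) + of_int (floor (x j - a))" by (simp add: b_def s_def frac_def)
          then have "frac (x j - b) = s + 1/2 - t" using frac_shift[of "s + 1/2 - t" "floor (x j - a)"] s0 tL' False by simp
          then show ?thesis using s0 tL' by simp
        qed
      qed auto
      then show False using ns by (auto simp: one_semicircle_def)
    qed
  qed
  have d1: "cdist (x i) a = 1/2 - t"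
  proof -
    have e: "x i - a - of_int f = t - 1/2" using tf by simp
    have "\<bar>t - 1/2\<bar> \<le> 1/2" using t01 tL L2 by linarith
    then have "cdist (x i) a = \<bar>t - 1/2\<bar>" using cdist_int[of "x i" a f] unfolding e by simp
    then show ?thesis using tL L2 t01 by (auto simp: abs_if)
  qed
  have d2: "cdist (x i) (a + L) = 1/2 + t - L"
  proof -
    have e: "x i - (a + L) - of_int (f - 1) = t - L + 1/2" using tf by simp
    have "\<bar>t - L + 1/2\<bar> \<le> 1/2" using t01 tL L2 by linarith
    then have "cdist (x i) (a + L) = \<bar>t - L + 1/2\<bar>" using cdist_int[of "x i" "a + L" "f - 1"] unfolding e by simp
    then show ?thesis using tL L2 t01 by (auto simp: abs_if)
  qed
  have d3: "cdist (x i) (a + L/2) = 1/2 - \<bar>t - L/2\<bar>"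
  proof (cases "L/2 \<le> t")
    case True
    have e: "x i - (a + L/2) - of_int f = t - L/2 - 1/2" using tf by simp
    have "\<bar>t - L/2 - 1/2\<bar> \<le> 1/2" using t01 tL L2 True by linarith
    then have "cdist (x i) (a + L/2) = \<bar>t - L/2 - 1/2\<bar>" using cdist_int[of "x i" "a + L/2" f] unfolding e by simp
    then show ?thesis using tL L2 t01 True by (auto simp: abs_if)
  next
    case False
    have e: "x i - (a + L/2) - of_int (f - 1) = t - L/2 + 1/2" using tf by simp
    have "\<bar>t - L/2 + 1/2\<bar> \<le> 1/2" using t01 tL L2 False by linarith
    then have "cdist (x i) (a + L/2) = \<bar>t - L/2 + 1/2\<bar>" using cdist_int[of "x i" "a + L/2" "f - 1"] unfolding e by simp
    then show ?thesis using tL L2 t01 False by (auto simp: abs_if)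
  qed
  have "cost (lrm a L) (x i) = 1/4 * cdist (x i) a + 1/4 * cdist (x i) (a + L) + 1/2 * cdist (x i) (a + L/2)"
    by (simp add: cost_def lrm_def)
  also have "\<dots> = 1/4 * (1/2 - t) + 1/4 * (1/2 + t - L) + 1/2 * (1/2 - \<bar>t - L/2\<bar>)"
    using d1 d2 d3 by simp
  finally have ce: "cost (lrm a L) (x i) = 1/4 * (1/2 - t) + 1/4 * (1/2 + t - L) + 1/2 * (1/2 - \<bar>t - L/2\<bar>)" .
  have "\<bar>t - L/2\<bar> \<le> L/2" using tL t01 by (simp add: abs_if)
  then have "1/4 \<le> 1/4 * (1/2 - t) + 1/4 * (1/2 + t - L) + 1/2 * (1/2 - \<bar>t - L/2\<bar>)" using L2 by (simp add: field_simps abs_if split: if_splits)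
  then show ?thesis using ce by linarith
qed

theorem mainTheorem14:
  fixes n i :: nat and x :: "nat \<Rightarrow> real" and y a L :: real
  assumes "\<not> one_semicircle n x"
    and "i < n"
    and "one_semicircle n (x(i := y))"
    and "minimal_arc n (x(i := y)) a L"
  shows "cost (rc n x) (x i) \<le> cost (lrm a L) (x i)"
  using rc_bound[OF assms(2), of x] lrm_bound[OF assms] by linarith
end
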